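(* Let $s>1/2$ and $0\le\varepsilon<1$, and fix a constant $c_0>0$. For a real-valued mean-zero function $\phi$ on $\mathbb{T}$ (possibly depending on $t$) define the multilinear expressions \[ \widehat{B_1}(\phi)(n)=\sum_{\substack{n=n_1+n_2\\ n_1,n_2\neq n}}\frac{n(n_1^2+n_2^2)}{\Phi_2(n_1,n_2)}\widehat\phi(n_1)\widehat\phi(n_2), \] \[ \widehat{B_2}(\phi)(n)=\sum_{\substack{n=n_1+n_2+n_3\\ |\Phi_3(n_1,n_2,n_3)|\ge c_0\max_i|n_i|^4\\ n_1,n_2,n_3\neq n}}\frac{n(n_1^2+(n_2+n_3)^2)(n_2+n_3)(n_2^2+n_3^2)}{\Phi_2(n_1,n_2+n_3)\,\Phi_3(n_1,n_2,n_3)}\widehat\phi(n_1)\widehat\phi(n_2)\widehat\phi(n_3), \] where all frequencies $n,n_j$ range over $\mathbb{Z}\setminus\{0\}$ (and terms with $n_2+n_3=0$ in $B_2$ are omitted). Then for every such $\tilde u$, \[ \|B_1(\tilde u)+B_2(\tilde u)\|_{C^0_tH^{s+\varepsilon}_x}\lesssim\|\tilde u\|_{C^0_tH^s_x}^2+\|\tilde u\|_{C^0_tH^s_x}^3. \]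
   Context: $\Phi_2(n_1,n_2)=(n_1+n_2)^5-n_1^5-n_2^5$ and $\Phi_3(n_1,n_2,n_3)=(n_1+n_2+n_3)^5-n_1^5-n_2^5-n_3^5$. Factors of $2\pi$ are ignored. The implicit constant may depend on $s,\varepsilon,c_0$. *)

theory Defs
  imports "HOL-Analysis.Analysis"
begin

text \<open>Functions on the torus are represented by their Fourier coefficients
  a :: int \<Rightarrow> complex. Factors of 2 pi are ignored.\<close>

definition Phi2 :: "int \<Rightarrow> int \<Rightarrow> int" where
  "Phi2 n1 n2 = (n1 + n2)^5 - n1^5 - n2^5"

definition Phi3 :: "int \<Rightarrow> int \<Rightarrow> int \<Rightarrow> int" where
  "Phi3 n1 n2 n3 = (n1 + n2 + n3)^5 - n1^5 - n2^5 - n3^5"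

definition real_mean_zero :: "(int \<Rightarrow> complex) \<Rightarrow> bool" where
  "real_mean_zero a \<longleftrightarrow> a 0 = 0 \<and> (\<forall>n. a (-n) = cnj (a n))"

definition in_Hs :: "real \<Rightarrow> (int \<Rightarrow> complex) \<Rightarrow> bool" where
  "in_Hs s a \<longleftrightarrow> (\<lambda>n. (1 + (real_of_int n)^2) powr s * (cmod (a n))^2) summable_on UNIV"

definition Hs_norm :: "real \<Rightarrow> (int \<Rightarrow> complex) \<Rightarrow> real" where
  "Hs_norm s a = sqrt (\<Sum>\<^sub>\<infinity>n. (1 + (real_of_int n)^2) powr s * (cmod (a n))^2)"

definition B1_index :: "int \<Rightarrow> int set" where
  "B1_index n = {n1. n1 \<noteq> 0 \<and> n - n1 \<noteq> 0 \<and> n1 \<noteq> n \<and> n - n1 \<noteq> n}"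

definition B1_term :: "(int \<Rightarrow> complex) \<Rightarrow> int \<Rightarrow> int \<Rightarrow> complex" where
  "B1_term a n n1 = (let n2 = n - n1 in
     complex_of_real (real_of_int (n * (n1^2 + n2^2)) / real_of_int (Phi2 n1 n2)) * a n1 * a n2)"

definition B1 :: "(int \<Rightarrow> complex) \<Rightarrow> int \<Rightarrow> complex" where
  "B1 a n = (if n = 0 then 0 else \<Sum>\<^sub>\<infinity>n1\<in>B1_index n. B1_term a n n1)"

definition B2_index :: "real \<Rightarrow> int \<Rightarrow> (int \<times> int \<times> int) set" where
  "B2_index c0 n = {(n1, n2, n3). n1 + n2 + n3 = n \<and>
     n1 \<noteq> 0 \<and> n2 \<noteq> 0 \<and> n3 \<noteq> 0 \<and> n1 \<noteq> n \<and> n2 \<noteq> n \<and> n3 \<noteq> n \<and> n2 + n3 \<noteq> 0 \<and>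
     \<bar>real_of_int (Phi3 n1 n2 n3)\<bar> \<ge> c0 * real_of_int (max \<bar>n1\<bar> (max \<bar>n2\<bar> \<bar>n3\<bar>)) ^ 4}"

definition B2_term :: "(int \<Rightarrow> complex) \<Rightarrow> int \<Rightarrow> int \<times> int \<times> int \<Rightarrow> complex" where
  "B2_term a n m = (case m of (n1, n2, n3) \<Rightarrow>
     complex_of_real (real_of_int (n * (n1^2 + (n2 + n3)^2) * (n2 + n3) * (n2^2 + n3^2))
        / (real_of_int (Phi2 n1 (n2 + n3)) * real_of_int (Phi3 n1 n2 n3)))
     * a n1 * a n2 * a n3)"

definition B2 :: "real \<Rightarrow> (int \<Rightarrow> complex) \<Rightarrow> int \<Rightarrow> complex" where
  "B2 c0 a n = (if n = 0 then 0 else \<Sum>\<^sub>\<infinity>m\<in>B2_index c0 n. B2_term a n m)"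

end

theory Submission
  imports Defs
begin


lemma nn_bound:
  fixes f :: "'a \<Rightarrow> real"
  assumes "\<And>x. x \<in> A \<Longrightarrow> f x \<ge> 0" "\<And>F. finite F \<Longrightarrow> F \<subseteq> A \<Longrightarrow> sum f F \<le> C"
  shows "f summable_on A" "infsum f A \<le> C"
proof -
  show s: "f summable_on A"
    by (rule nonneg_bdd_above_summable_on) (use assms in \<open>auto simp: bdd_above_def\<close>)
  show "infsum f A \<le> C"
    by (rule infsum_le_finite_sums[OF s]) (use assms in auto)
qed

lemma nn_le_infsum:
  fixes f :: "'a \<Rightarrow> real"
  assumes "f summable_on A" "finite F" "F \<subseteq> A" "\<And>x. x \<in> A \<Longrightarrow> f x \<ge> 0"
  shows "sum f F \<le> infsum f A"
  by (rule finite_sum_le_infsum) (use assms in auto)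

lemma infsum_finite_sum:
  fixes f :: "'i \<Rightarrow> 'a \<Rightarrow> real"
  assumes "finite N" "\<And>n. n \<in> N \<Longrightarrow> f n summable_on A"
  shows "(\<lambda>k. \<Sum>n\<in>N. f n k) summable_on A \<and> infsum (\<lambda>k. \<Sum>n\<in>N. f n k) A = (\<Sum>n\<in>N. infsum (f n) A)"
  using assms
proof (induction N rule: finite_induct)
  case empty then show ?case by simp
next
  case (insert x F)
  then have a: "f x summable_on A" and b: "(\<lambda>k. \<Sum>n\<in>F. f n k) summable_on A"
    and c: "infsum (\<lambda>k. \<Sum>n\<in>F. f n k) A = (\<Sum>n\<in>F. infsum (f n) A)" by auto
  show ?case using insert(1,2) summable_on_add[OF a b] infsum_add[OF a b] c by simp
qed

lemma shift_summable:
  fixes g :: "int \<Rightarrow> real"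
  assumes "g summable_on UNIV"
  shows "(\<lambda>k. g (n - k)) summable_on UNIV" "infsum (\<lambda>k. g (n - k)) UNIV = infsum g UNIV"
proof -
  have bij: "bij_betw (\<lambda>k::int. n - k) UNIV UNIV"
    by (rule bij_betwI[where g="\<lambda>k. n - k"]) auto
  show "(\<lambda>k. g (n - k)) summable_on UNIV"
    using summable_on_reindex_bij_betw[OF bij, where f=g] assms by simp
  show "infsum (\<lambda>k. g (n - k)) UNIV = infsum g UNIV"
    using infsum_reindex_bij_betw[OF bij, where f=g] by simp
qed

lemma shift_sum_le:
  fixes g :: "int \<Rightarrow> real"
  assumes "g summable_on UNIV" "\<And>k. g k \<ge> 0" "finite F"
  shows "(\<Sum>k\<in>F. g (n - k)) \<le> infsum g UNIV"
  using nn_le_infsum[OF shift_summable(1)[OF assms(1), of n] assms(3)] assms(2)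
    shift_summable(2)[OF assms(1), of n] by simp

lemma single_le_infsum:
  fixes g :: "'a \<Rightarrow> real"
  assumes "g summable_on UNIV" "\<And>k. g k \<ge> 0"
  shows "g x \<le> infsum g UNIV"
  using nn_le_infsum[OF assms(1), of "{x}"] assms(2) by simp



lemma conv_l1:
  fixes f g :: "int \<Rightarrow> real"
  assumes f0: "\<And>k. f k \<ge> 0" and g0: "\<And>k. g k \<ge> 0"
    and fs: "f summable_on UNIV" and gs: "g summable_on UNIV"
  shows "(\<lambda>k. f k * g (n - k)) summable_on UNIV"
    and "(\<lambda>n. infsum (\<lambda>k. f k * g (n - k)) UNIV) summable_on UNIV"
    and "infsum (\<lambda>n. infsum (\<lambda>k. f k * g (n - k)) UNIV) UNIV \<le> infsum f UNIV * infsum g UNIV"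
proof -
  define G where "G = infsum g UNIV"
  have gle: "g j \<le> G" for j unfolding G_def by (rule single_le_infsum[OF gs g0])
  have G0: "G \<ge> 0" using g0[of 0] gle[of 0] by linarith
  have cs: "(\<lambda>k. f k * g (m - k)) summable_on UNIV" for m
  proof (rule nn_bound(1))
    fix F :: "int set" assume "finite F"
    have "(\<Sum>k\<in>F. f k * g (m - k)) \<le> (\<Sum>k\<in>F. f k * G)"
      by (rule sum_mono) (simp add: f0 gle mult_left_mono)
    also have "\<dots> = sum f F * G" by (simp add: sum_distrib_right)
    also have "\<dots> \<le> infsum f UNIV * G"
      by (rule mult_right_mono) (use nn_le_infsum[OF fs \<open>finite F\<close>] f0 G0 in auto)
    finally show "(\<Sum>k\<in>F. f k * g (m - k)) \<le> infsum f UNIV * G" .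
  qed (simp add: f0 g0)
  then show "(\<lambda>k. f k * g (n - k)) summable_on UNIV" .
  have fG: "(\<lambda>k. f k * G) summable_on UNIV" by (rule summable_on_cmult_left[OF fs])
  have main: "(\<lambda>n. infsum (\<lambda>k. f k * g (n - k)) UNIV) summable_on UNIV \<and>
     infsum (\<lambda>n. infsum (\<lambda>k. f k * g (n - k)) UNIV) UNIV \<le> infsum f UNIV * G"
  proof -
  have bnd: "(\<Sum>n\<in>N. infsum (\<lambda>k. f k * g (n - k)) UNIV) \<le> infsum f UNIV * G" if N: "finite N" for N :: "int set"
  proof -
    have "(\<Sum>n\<in>N. infsum (\<lambda>k. f k * g (n - k)) UNIV) = infsum (\<lambda>k. \<Sum>n\<in>N. f k * g (n - k)) UNIV"
      using infsum_finite_sum[OF N, of "\<lambda>n k. f k * g (n - k)" UNIV] cs by simp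
    also have "\<dots> \<le> infsum (\<lambda>k. f k * G) UNIV"
    proof (rule infsum_mono)
      show "(\<lambda>k. \<Sum>n\<in>N. f k * g (n - k)) summable_on UNIV"
        using infsum_finite_sum[OF N, of "\<lambda>n k. f k * g (n - k)" UNIV] cs by simp
      show "(\<lambda>k. f k * G) summable_on UNIV" by (rule fG)
      fix k
      have "(\<Sum>n\<in>N. f k * g (n - k)) = f k * (\<Sum>n\<in>N. g (n - k))" by (simp add: sum_distrib_left)
      also have "\<dots> \<le> f k * G"
      proof (rule mult_left_mono[OF _ f0])
        have "(\<Sum>n\<in>N. g (n - k)) = (\<Sum>j\<in>(\<lambda>n. n - k) ` N. g j)"
          by (subst sum.reindex) (auto simp: inj_on_def)
        also have "\<dots> \<le> G" unfolding G_def
          by (rule nn_le_infsum[OF gs]) (use N g0 in auto)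
        finally show "(\<Sum>n\<in>N. g (n - k)) \<le> G" .
      qed
      finally show "(\<Sum>n\<in>N. f k * g (n - k)) \<le> f k * G" .
    qed
    also have "\<dots> = infsum f UNIV * G" by (rule infsum_cmult_left) (use fs in auto)
    finally show ?thesis .
  qed
  have nn: "\<And>x. x \<in> UNIV \<Longrightarrow> 0 \<le> infsum (\<lambda>k. f k * g (x - k)) UNIV"
    by (intro infsum_nonneg) (simp add: f0 g0)
  show ?thesis using nn_bound[OF nn bnd] by auto
  qed
  then show "(\<lambda>n. infsum (\<lambda>k. f k * g (n - k)) UNIV) summable_on UNIV"
    and "infsum (\<lambda>n. infsum (\<lambda>k. f k * g (n - k)) UNIV) UNIV \<le> infsum f UNIV * infsum g UNIV"
    by (auto simp: G_def)
qed

lemma conv_l2: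
  fixes f g :: "int \<Rightarrow> real"
  assumes f0: "\<And>k. f k \<ge> 0" and g0: "\<And>k. g k \<ge> 0"
    and fs: "(\<lambda>k. (f k)^2) summable_on UNIV" and gs: "g summable_on UNIV"
  shows "(\<lambda>k. f k * g (n - k)) summable_on UNIV"
    and "(\<lambda>n. (infsum (\<lambda>k. f k * g (n - k)) UNIV)^2) summable_on UNIV"
    and "infsum (\<lambda>n. (infsum (\<lambda>k. f k * g (n - k)) UNIV)^2) UNIV
          \<le> infsum (\<lambda>k. (f k)^2) UNIV * (infsum g UNIV)^2"
proof -
  define G where "G = infsum g UNIV"
  define H where "H m = infsum (\<lambda>k. (f k)^2 * g (m - k)) UNIV" for m
  have G0: "G \<ge> 0" unfolding G_def by (intro infsum_nonneg) (simp add: g0)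
  note L1 = conv_l1[of "\<lambda>k. (f k)^2" g, OF _ g0 fs gs, simplified]
  have Hs: "H summable_on UNIV" unfolding H_def by (rule L1(2))
  have HS: "infsum H UNIV \<le> infsum (\<lambda>k. (f k)^2) UNIV * G" unfolding H_def G_def by (rule L1(3))
  have H0: "H m \<ge> 0" for m unfolding H_def by (intro infsum_nonneg) (simp add: g0)
  have fin: "(\<Sum>k\<in>F. f k * g (m - k)) \<le> sqrt (H m * G)" if F: "finite F" for F m
  proof -
    have "(\<Sum>k\<in>F. (f k * sqrt (g (m - k))) * sqrt (g (m - k)))\<^sup>2
       \<le> (\<Sum>k\<in>F. (f k * sqrt (g (m - k)))\<^sup>2) * (\<Sum>k\<in>F. (sqrt (g (m - k)))\<^sup>2)"
      by (rule Cauchy_Schwarz_ineq_sum)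
    also have "\<dots> = (\<Sum>k\<in>F. (f k)^2 * g (m - k)) * (\<Sum>k\<in>F. g (m - k))"
      by (simp add: power_mult_distrib g0)
    also have "\<dots> \<le> H m * G"
    proof (rule mult_mono)
      show "(\<Sum>k\<in>F. (f k)^2 * g (m - k)) \<le> H m" unfolding H_def
        by (rule nn_le_infsum[OF L1(1) F]) (auto simp: g0)
      show "(\<Sum>k\<in>F. g (m - k)) \<le> G" unfolding G_def by (rule shift_sum_le[OF gs g0 F])
    qed (auto simp: H0 sum_nonneg g0)
    finally have "(\<Sum>k\<in>F. f k * g (m - k))\<^sup>2 \<le> H m * G"
      by (simp add: mult.assoc g0 flip: power2_eq_square)
    then show ?thesis using real_le_rsqrt by blast
  qed
  have cs: "(\<lambda>k. f k * g (m - k)) summable_on UNIV" and cb: "infsum (\<lambda>k. f k * g (m - k)) UNIV \<le> sqrt (H m * G)" for m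
    using nn_bound[of UNIV "\<lambda>k. f k * g (m - k)", OF _ fin] by (auto simp: f0 g0)
  then show "(\<lambda>k. f k * g (n - k)) summable_on UNIV" by blast
  have sq: "(infsum (\<lambda>k. f k * g (m - k)) UNIV)^2 \<le> G * H m" for m
  proof -
    have "0 \<le> infsum (\<lambda>k. f k * g (m - k)) UNIV" by (intro infsum_nonneg) (simp add: f0 g0)
    then have "(infsum (\<lambda>k. f k * g (m - k)) UNIV)^2 \<le> (sqrt (H m * G))^2"
      using cb[of m] power_mono by blast
    then show ?thesis using H0[of m] G0 by (simp add: mult.commute)
  qed
  have GH: "(\<lambda>m. G * H m) summable_on UNIV" by (rule summable_on_cmult_right[OF Hs])
  show s2: "(\<lambda>n. (infsum (\<lambda>k. f k * g (n - k)) UNIV)^2) summable_on UNIV"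
    by (rule summable_on_comparison_test[OF GH]) (auto simp: sq)
  have "infsum (\<lambda>n. (infsum (\<lambda>k. f k * g (n - k)) UNIV)^2) UNIV \<le> infsum (\<lambda>m. G * H m) UNIV"
    by (rule infsum_mono[OF s2 GH]) (simp add: sq)
  also have "\<dots> = G * infsum H UNIV" by (rule infsum_cmult_right) (use Hs in auto)
  also have "\<dots> \<le> G * (infsum (\<lambda>k. (f k)^2) UNIV * G)" by (rule mult_left_mono[OF HS G0])
  finally show "infsum (\<lambda>n. (infsum (\<lambda>k. f k * g (n - k)) UNIV)^2) UNIV
          \<le> infsum (\<lambda>k. (f k)^2) UNIV * (infsum g UNIV)^2"
    by (simp add: G_def power2_eq_square mult_ac)
qed



lemma triple_bound:
  fixes f g :: "int \<Rightarrow> real"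
  assumes f0: "\<And>k. f k \<ge> 0" and g0: "\<And>k. g k \<ge> 0"
    and fs: "(\<lambda>k. (f k)^2) summable_on UNIV" and gs: "g summable_on UNIV"
    and G: "finite G" "G \<subseteq> {(x,y,z). x + y + z = n}"
  shows "(\<Sum>(x,y,z)\<in>G. f x * g y * g z) \<le> infsum (\<lambda>k. f k * infsum (\<lambda>l. g l * g ((n - k) - l)) UNIV) UNIV"
proof -
  define gg where "gg j = infsum (\<lambda>l. g l * g (j - l)) UNIV" for j
  note C1 = conv_l1[OF g0 g0 gs gs]
  have gg0: "gg j \<ge> 0" for j unfolding gg_def by (intro infsum_nonneg) (simp add: g0)
  have ggs: "gg summable_on UNIV" unfolding gg_def by (rule C1(2))
  note C2 = conv_l2[OF f0 gg0 fs ggs]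
  define X where "X = fst ` G"
  define Y where "Y = (fst \<circ> snd) ` G"
  define \<phi> where "\<phi> = (\<lambda>(x::int, y::int). (x, y, n - x - y))"
  have fin: "finite X" "finite Y" using G by (auto simp: X_def Y_def)
  have sub: "G \<subseteq> \<phi> ` (X \<times> Y)"
  proof
    fix t assume t: "t \<in> G"
    obtain x y z where t': "t = (x,y,z)" by (cases t) auto
    with t G have "z = n - x - y" by auto
    moreover have "x \<in> X" "y \<in> Y" using t t' by (force simp: X_def Y_def)+
    ultimately show "t \<in> \<phi> ` (X \<times> Y)" unfolding \<phi>_def t' by (auto intro!: image_eqI[where x="(x,y)"])
  qed
  have inj: "inj_on \<phi> (X \<times> Y)" by (auto simp: \<phi>_def inj_on_def)
  have "(\<Sum>(x,y,z)\<in>G. f x * g y * g z) \<le> (\<Sum>(x,y,z)\<in>\<phi> ` (X \<times> Y). f x * g y * g z)"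
    by (rule sum_mono2) (use fin sub f0 g0 in \<open>auto intro!: mult_nonneg_nonneg\<close>)
  also have "\<dots> = (\<Sum>(x,y)\<in>X \<times> Y. f x * g y * g (n - x - y))"
    by (subst sum.reindex[OF inj]) (simp add: \<phi>_def case_prod_beta)
  also have "\<dots> = (\<Sum>x\<in>X. f x * (\<Sum>y\<in>Y. g y * g ((n - x) - y)))"
    by (simp add: sum.cartesian_product[symmetric] sum_distrib_left mult.assoc diff_diff_eq)
  also have "\<dots> \<le> (\<Sum>x\<in>X. f x * gg (n - x))"
  proof (rule sum_mono, rule mult_left_mono[OF _ f0])
    fix x
    show "(\<Sum>y\<in>Y. g y * g ((n - x) - y)) \<le> gg (n - x)" unfolding gg_def
      by (rule nn_le_infsum[OF C1(1) fin(2)]) (auto simp: g0)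
  qed
  also have "\<dots> \<le> infsum (\<lambda>k. f k * gg (n - k)) UNIV"
    by (rule nn_le_infsum[OF C2(1) fin(1)]) (auto simp: f0 gg0)
  finally show ?thesis by (simp add: gg_def)
qed



lemma weight_summable:
  fixes s :: real
  assumes "s > 1/2"
  shows "(\<lambda>n::int. (1 + (real_of_int n)^2) powr (-s)) summable_on UNIV"
proof -
  define q where "q n = (1 + (real n)^2) powr (-s)" for n :: nat
  have "summable (\<lambda>n. real n powr (-2 * s))"
    using summable_real_powr_iff[of "-2 * s"] assms by simp
  then have "summable q"
  proof (rule summable_comparison_test'[where N=1])
    fix n :: nat assume "n \<ge> 1"
    then have "(real n)^2 \<le> 1 + (real n)^2" "0 < (real n)^2" by auto
    then have "(1 + (real n)^2) powr (-s) \<le> ((real n)^2) powr (-s)"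
      using assms by (intro powr_mono2') auto
    also have "((real n)^2) powr (-s) = real n powr (-2 * s)"
    proof -
      have "(real n)^2 = real n powr 2" using \<open>n \<ge> 1\<close> by simp
      have e2: "(real n powr 2) powr (-s) = real n powr (2 * (-s))" by (rule powr_powr)
      show ?thesis unfolding \<open>(real n)^2 = real n powr 2\<close> e2 by simp
    qed
    finally show "norm (q n) \<le> real n powr (-2 * s)" by (simp add: q_def)
  qed
  then have qs: "q summable_on UNIV" by (rule summable_nonneg_imp_summable_on) (simp add: q_def)
  define h where "h n = (1 + (real_of_int n)^2) powr (-s)" for n :: int
  have "h summable_on (int ` UNIV)"
    by (subst summable_on_reindex) (use qs[unfolded q_def[abs_def]] in \<open>auto simp: o_def h_def\<close>)
  moreover have "h summable_on ((\<lambda>n. - int n) ` UNIV)"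
    by (subst summable_on_reindex) (use qs[unfolded q_def[abs_def]] in \<open>auto simp: o_def h_def inj_on_def\<close>)
  ultimately have "h summable_on (int ` UNIV \<union> (\<lambda>n. - int n) ` UNIV)"
    by (rule summable_on_union)
  moreover have "int ` UNIV \<union> (\<lambda>n. - int n) ` UNIV = UNIV"
  proof -
    have "x \<in> int ` UNIV \<union> (\<lambda>n. - int n) ` UNIV" for x :: int
    proof (cases "x \<ge> 0")
      case True then show ?thesis by (auto intro!: image_eqI[where x="nat x"])
    next
      case False then show ?thesis by (auto intro!: image_eqI[where x="nat (-x)"])
    qed
    then show ?thesis by auto
  qed
  ultimately show ?thesis by (simp add: h_def[abs_def])
qed



lemma phi2_factor: "((x::real)+y)^5 - x^5 - y^5 = 5*x*y*(x+y)*(x^2+x*y+y^2)"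
  by algebra

lemma mult1_real:
  fixes x y :: real
  assumes "x \<noteq> 0" "y \<noteq> 0" "x + y \<noteq> 0"
  shows "\<bar>(x+y)*(x^2+y^2) / ((x+y)^5 - x^5 - y^5)\<bar> \<le> 2/(5*\<bar>x\<bar>*\<bar>y\<bar>)"
proof -
  define Q where "Q = x^2+x*y+y^2"
  have QQ: "2*Q = x^2+y^2+(x+y)^2" unfolding Q_def by (simp add: power2_eq_square algebra_simps)
  have Q2: "x^2+y^2 \<le> 2*Q" using QQ zero_le_power2[of "x+y"] by linarith
  have "x^2 > 0" "y^2 > 0" using assms by auto
  then have Qp: "Q > 0" using QQ zero_le_power2[of "x+y"] by linarith
  have "(x+y)*(x^2+y^2) / ((x+y)^5 - x^5 - y^5) = (x^2+y^2) / (5*x*y*Q)"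
  proof -
    have "5*x*y*(x+y)*Q = (x+y)*(5*x*y*Q)" by (simp add: algebra_simps)
    then show ?thesis unfolding phi2_factor Q_def[symmetric]
      by (simp only:) (rule mult_divide_mult_cancel_left[OF assms(3)])
  qed
  then have "\<bar>(x+y)*(x^2+y^2) / ((x+y)^5 - x^5 - y^5)\<bar> = (x^2+y^2) / (5*\<bar>x\<bar>*\<bar>y\<bar>*Q)"
    using Qp by (simp add: abs_mult)
  also have "\<dots> \<le> (2*Q) / (5*\<bar>x\<bar>*\<bar>y\<bar>*Q)"
    using Q2 Qp assms by (intro divide_right_mono) auto
  also have "\<dots> = 2/(5*\<bar>x\<bar>*\<bar>y\<bar>)" using Qp by simp
  finally show ?thesis .
qed

lemma wt:
  fixes X Y c s \<epsilon> :: real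
  assumes "1 \<le> Y" "0 \<le> X" "X \<le> c*Y" "1 \<le> c" "0 \<le> \<epsilon>" "\<epsilon> \<le> 1" "0 < s"
  shows "X powr ((s+\<epsilon>)/2) \<le> c powr ((s+1)/2) * (Y powr (s/2) * sqrt Y)"
proof -
  have "X powr ((s+\<epsilon>)/2) \<le> (c*Y) powr ((s+\<epsilon>)/2)"
    using assms by (intro powr_mono2) auto
  also have "\<dots> = c powr ((s+\<epsilon>)/2) * Y powr ((s+\<epsilon>)/2)"
    using assms by (simp add: powr_mult)
  also have "\<dots> \<le> c powr ((s+1)/2) * Y powr ((s+1)/2)"
    using assms by (intro mult_mono powr_mono) auto
  also have "Y powr ((s+1)/2) = Y powr (s/2) * sqrt Y"
    using assms by (simp add: powr_add[symmetric] powr_half_sqrt[symmetric] add_divide_distrib)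
  finally show ?thesis by simp
qed

lemma core1:
  fixes x y s \<epsilon> :: real
  assumes x1: "1 \<le> \<bar>x\<bar>" and y1: "1 \<le> \<bar>y\<bar>" and xy: "x + y \<noteq> 0" and yx: "\<bar>y\<bar> \<le> \<bar>x\<bar>"
    and e: "0 \<le> \<epsilon>" "\<epsilon> \<le> 1" and s: "0 < s"
  shows "(1+(x+y)^2) powr ((s+\<epsilon>)/2) * \<bar>(x+y)*(x^2+y^2) / ((x+y)^5 - x^5 - y^5)\<bar>
          \<le> 4 powr ((s+1)/2) * (1+x^2) powr (s/2)"
proof -
  define C where "C = 4 powr ((s+1)/2)"
  define P where "P = (1+x^2) powr (s/2)"
  have C0: "C \<ge> 0" "P \<ge> 0" by (auto simp: C_def P_def)
  have m: "\<bar>(x+y)*(x^2+y^2) / ((x+y)^5 - x^5 - y^5)\<bar> \<le> 2/(5*\<bar>x\<bar>*\<bar>y\<bar>)"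
    by (rule mult1_real) (use x1 y1 xy in auto)
  have "\<bar>x+y\<bar> \<le> 2*\<bar>x\<bar>" using yx by linarith
  then have "\<bar>x+y\<bar>^2 \<le> (2*\<bar>x\<bar>)^2" by (intro power_mono) auto
  then have "(x+y)^2 \<le> 4*x^2" by (simp add: power_mult_distrib)
  then have X: "1+(x+y)^2 \<le> 4*(1+x^2)" by (simp add: distrib_left)
  have W: "(1+(x+y)^2) powr ((s+\<epsilon>)/2) \<le> C * (P * sqrt (1+x^2))"
    unfolding C_def P_def by (rule wt) (use X e s in auto)
  have "1 \<le> x^2" using x1 by (metis abs_ge_self one_le_power power2_abs)
  then have "1 + x^2 \<le> (2*\<bar>x\<bar>)^2" by (simp add: power_mult_distrib)
  then have sq0: "sqrt (1+x^2) \<le> sqrt ((2*\<bar>x\<bar>)^2)" by (rule real_sqrt_le_mono)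
  have e2: "sqrt ((2*\<bar>x\<bar>)^2) = 2*\<bar>x\<bar>" by (simp only: real_sqrt_abs)
  have sq: "sqrt (1+x^2) \<le> 2*\<bar>x\<bar>" using sq0 e2 by linarith
  have CP: "C * P \<ge> 0" using C0 by simp
  have a: "(1+(x+y)^2) powr ((s+\<epsilon>)/2) \<le> C * (P * (2*\<bar>x\<bar>))"
    using W mult_left_mono[OF mult_left_mono[OF sq C0(2)] C0(1)] by linarith
  have "(1+(x+y)^2) powr ((s+\<epsilon>)/2) * \<bar>(x+y)*(x^2+y^2) / ((x+y)^5 - x^5 - y^5)\<bar>
        \<le> (C * (P * (2*\<bar>x\<bar>))) * (2/(5*\<bar>x\<bar>*\<bar>y\<bar>))"
    by (rule mult_mono[OF a m]) (use C0 in auto)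
  also have "\<dots> = C * P * (4 / (5 * \<bar>y\<bar>))" using x1 by (simp add: field_simps)
  also have "\<dots> \<le> C * P * 1"
  proof (rule mult_left_mono[OF _ CP])
    show "4 / (5 * \<bar>y\<bar>) \<le> 1" using y1 by (simp add: divide_le_eq)
  qed
  finally show ?thesis by (simp add: C_def P_def)
qed

lemma core2:
  fixes x y z s \<epsilon> c0 Mx F :: real
  assumes x1: "1 \<le> \<bar>x\<bar>" and y1: "1 \<le> \<bar>y\<bar>" and z1: "1 \<le> \<bar>z\<bar>"
    and yz: "y + z \<noteq> 0" and xyz: "x + y + z \<noteq> 0"
    and Mx: "Mx = max \<bar>x\<bar> (max \<bar>y\<bar> \<bar>z\<bar>)"
    and F: "\<bar>F\<bar> \<ge> c0 * Mx^4" and c0: "c0 > 0"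
    and e: "0 \<le> \<epsilon>" "\<epsilon> \<le> 1" and s: "0 < s"
  shows "(1+(x+y+z)^2) powr ((s+\<epsilon>)/2) *
     \<bar>((x+y+z)*(x^2+(y+z)^2)*(y+z)*(y^2+z^2)) / (((x+(y+z))^5 - x^5 - (y+z)^5) * F)\<bar>
     \<le> 9 powr ((s+1)/2) * (2/c0) * (1+Mx^2) powr (s/2)"
proof -
  define m where "m = y + z"
  define C where "C = 9 powr ((s+1)/2)"
  define P where "P = (1+Mx^2) powr (s/2)"
  have C0: "C \<ge> 0" "P \<ge> 0" by (auto simp: C_def P_def)
  have M1: "Mx \<ge> 1" "\<bar>x\<bar> \<le> Mx" "\<bar>y\<bar> \<le> Mx" "\<bar>z\<bar> \<le> Mx" using Mx x1 by (auto simp: le_max_iff_disj)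
  have Fp: "\<bar>F\<bar> > 0" using F c0 M1 by (smt (verit) zero_less_power mult_pos_pos)
  have r1: "\<bar>(x+m)*(x^2+m^2) / ((x+m)^5 - x^5 - m^5)\<bar> \<le> 2/(5*\<bar>x\<bar>*\<bar>m\<bar>)"
    by (rule mult1_real) (use x1 yz xyz in \<open>auto simp: m_def add.assoc\<close>)
  have split: "((x+y+z)*(x^2+(y+z)^2)*(y+z)*(y^2+z^2)) / (((x+(y+z))^5 - x^5 - (y+z)^5) * F)
      = ((x+m)*(x^2+m^2) / ((x+m)^5 - x^5 - m^5)) * (m*(y^2+z^2)/F)"
    by (simp add: m_def add.assoc)
  have "\<bar>((x+y+z)*(x^2+(y+z)^2)*(y+z)*(y^2+z^2)) / (((x+(y+z))^5 - x^5 - (y+z)^5) * F)\<bar>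
      \<le> 2/(5*\<bar>x\<bar>*\<bar>m\<bar>) * (\<bar>m\<bar>*(y^2+z^2)/\<bar>F\<bar>)"
    unfolding split abs_mult by (rule mult_mono[OF r1]) (auto simp: abs_mult)
  also have "\<dots> = 2*(y^2+z^2)/(5*\<bar>x\<bar>*\<bar>F\<bar>)" using yz Fp x1 by (simp add: m_def field_simps)
  also have "\<dots> \<le> (4*Mx^2)/(5*c0*Mx^4)"
  proof (rule frac_le)
    have "y^2 \<le> Mx^2" "z^2 \<le> Mx^2" using M1 by (metis abs_ge_zero power2_abs power_mono)+
    then show "2*(y^2+z^2) \<le> 4*Mx^2" unfolding distrib_left by linarith
    show "0 < 5*c0*Mx^4" using c0 M1 by simp
    have "5*c0*Mx^4 \<le> 5*1*\<bar>F\<bar>" using F by simp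
    also have "\<dots> \<le> 5*\<bar>x\<bar>*\<bar>F\<bar>" using x1 Fp by (intro mult_right_mono mult_left_mono) auto
    finally show "5*c0*Mx^4 \<le> 5*\<bar>x\<bar>*\<bar>F\<bar>" .
  qed simp
  also have "\<dots> = 4/(5*c0*Mx^2)" using M1 c0 by (simp add: field_simps power_numeral_reduce)
  finally have r: "\<bar>((x+y+z)*(x^2+(y+z)^2)*(y+z)*(y^2+z^2)) / (((x+(y+z))^5 - x^5 - (y+z)^5) * F)\<bar>
      \<le> 4/(5*c0*Mx^2)" .
  have "\<bar>x+y+z\<bar> \<le> 3*Mx" using M1 by linarith
  then have "\<bar>x+y+z\<bar>^2 \<le> (3*Mx)^2" by (intro power_mono) auto
  then have "(x+y+z)^2 \<le> 9*Mx^2" by (simp add: power_mult_distrib)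
  then have X: "1+(x+y+z)^2 \<le> 9*(1+Mx^2)" by (simp add: distrib_left)
  have W: "(1+(x+y+z)^2) powr ((s+\<epsilon>)/2) \<le> C * (P * sqrt (1+Mx^2))"
    unfolding C_def P_def by (rule wt) (use X e s in auto)
  have "1 \<le> Mx^2" using M1 by (simp add: one_le_power)
  then have "1 + Mx^2 \<le> (2*\<bar>Mx\<bar>)^2" by (simp add: power_mult_distrib)
  then have sq0: "sqrt (1+Mx^2) \<le> sqrt ((2*\<bar>Mx\<bar>)^2)" by (rule real_sqrt_le_mono)
  have e2: "sqrt ((2*\<bar>Mx\<bar>)^2) = 2*\<bar>Mx\<bar>" by (simp only: real_sqrt_abs)
  have sq: "sqrt (1+Mx^2) \<le> 2*Mx" using sq0 e2 M1 by linarith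
  have CP: "C * P \<ge> 0" using C0 by simp
  have a: "(1+(x+y+z)^2) powr ((s+\<epsilon>)/2) \<le> C * (P * (2*Mx))"
    using W mult_left_mono[OF mult_left_mono[OF sq C0(2)] C0(1)] by linarith
  have "(1+(x+y+z)^2) powr ((s+\<epsilon>)/2) *
     \<bar>((x+y+z)*(x^2+(y+z)^2)*(y+z)*(y^2+z^2)) / (((x+(y+z))^5 - x^5 - (y+z)^5) * F)\<bar>
     \<le> (C * (P * (2*Mx))) * (4/(5*c0*Mx^2))"
    by (rule mult_mono[OF a r]) (use C0 M1 in auto)
  also have "\<dots> = C * P * (8/(5*c0*Mx))" using M1 by (simp add: field_simps power2_eq_square)
  also have "\<dots> \<le> C * P * (2/c0)"
  proof (rule mult_left_mono[OF _ CP])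
    have "8/(5*c0*Mx) \<le> 8/(5*c0*1)" using M1 c0 by (intro divide_left_mono) auto
    also have "\<dots> \<le> 2/c0" using c0 by (simp add: divide_le_eq)
    finally show "8/(5*c0*Mx) \<le> 2/c0" .
  qed
  finally show ?thesis by (simp add: C_def P_def mult_ac)
qed



definition pw :: "real \<Rightarrow> int \<Rightarrow> real" where
  "pw s n = (1 + (real_of_int n)^2) powr (s/2)"

lemma pw_nonneg: "pw s n \<ge> 0" by (simp add: pw_def)

lemma core1_sym:
  fixes x y s \<epsilon> :: real
  assumes x1: "1 \<le> \<bar>x\<bar>" and y1: "1 \<le> \<bar>y\<bar>" and xy: "x + y \<noteq> 0"
    and e: "0 \<le> \<epsilon>" "\<epsilon> \<le> 1" and s: "0 < s"
  shows "(1+(x+y)^2) powr ((s+\<epsilon>)/2) * \<bar>(x+y)*(x^2+y^2) / ((x+y)^5 - x^5 - y^5)\<bar>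
          \<le> 4 powr ((s+1)/2) * ((1+x^2) powr (s/2) + (1+y^2) powr (s/2))"
proof (cases "\<bar>y\<bar> \<le> \<bar>x\<bar>")
  case True
  have "(1+(x+y)^2) powr ((s+\<epsilon>)/2) * \<bar>(x+y)*(x^2+y^2) / ((x+y)^5 - x^5 - y^5)\<bar>
          \<le> 4 powr ((s+1)/2) * (1+x^2) powr (s/2)" by (rule core1) (use assms True in auto)
  also have "\<dots> \<le> 4 powr ((s+1)/2) * ((1+x^2) powr (s/2) + (1+y^2) powr (s/2))"
    by (intro mult_left_mono) auto
  finally show ?thesis .
next
  case False
  have "(1+(y+x)^2) powr ((s+\<epsilon>)/2) * \<bar>(y+x)*(y^2+x^2) / ((y+x)^5 - y^5 - x^5)\<bar>
          \<le> 4 powr ((s+1)/2) * (1+y^2) powr (s/2)" by (rule core1) (use assms False in auto)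
  also have "\<dots> \<le> 4 powr ((s+1)/2) * ((1+x^2) powr (s/2) + (1+y^2) powr (s/2))"
    by (intro mult_left_mono) auto
  finally show ?thesis by (simp add: add.commute diff_diff_eq2 algebra_simps)
qed

lemma cmod_r2: "cmod (complex_of_real r * u * v) = \<bar>r\<bar> * cmod u * cmod v"
  by (simp add: norm_mult)

lemma cmod_r3: "cmod (complex_of_real r * u * v * w) = \<bar>r\<bar> * cmod u * cmod v * cmod w"
  by (simp add: norm_mult)

lemma int_abs_ge1: "(k::int) \<noteq> 0 \<Longrightarrow> 1 \<le> \<bar>real_of_int k\<bar>"
  by linarith

lemma B1_pt:
  fixes a :: "int \<Rightarrow> complex"
  assumes s: "s > 0" and e: "0 \<le> \<epsilon>" "\<epsilon> \<le> 1" and n: "n \<noteq> 0" and k: "k \<in> B1_index n"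
  shows "pw (s+\<epsilon>) n * cmod (B1_term a n k) \<le> 4 powr ((s+1)/2) *
     (pw s k * cmod (a k) * cmod (a (n-k)) + cmod (a k) * (pw s (n-k) * cmod (a (n-k))))"
proof -
  define x y where "x = real_of_int k" and "y = real_of_int (n - k)"
  have k0: "k \<noteq> 0" "n - k \<noteq> 0" using k by (auto simp: B1_index_def)
  have nxy: "real_of_int n = x + y" by (simp add: x_def y_def)
  have r: "real_of_int (n*(k^2+(n-k)^2)) / real_of_int (Phi2 k (n-k)) = (x+y)*(x^2+y^2)/((x+y)^5-x^5-y^5)"
    unfolding Phi2_def by (simp add: x_def y_def)
  have cm: "cmod (B1_term a n k) = \<bar>(x+y)*(x^2+y^2)/((x+y)^5-x^5-y^5)\<bar> * cmod (a k) * cmod (a (n-k))"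
    unfolding B1_term_def Let_def cmod_r2 r by (rule refl)
  have main: "pw (s+\<epsilon>) n * \<bar>(x+y)*(x^2+y^2)/((x+y)^5-x^5-y^5)\<bar> \<le> 4 powr ((s+1)/2) * (pw s k + pw s (n-k))"
    unfolding pw_def nxy x_def[symmetric] y_def[symmetric]
    by (rule core1_sym) (use k0 n e s nxy in \<open>auto simp: x_def y_def int_abs_ge1\<close>)
  have "pw (s+\<epsilon>) n * cmod (B1_term a n k) = (pw (s+\<epsilon>) n * \<bar>(x+y)*(x^2+y^2)/((x+y)^5-x^5-y^5)\<bar>) * (cmod (a k) * cmod (a (n-k)))"
    unfolding cm by (simp add: mult_ac)
  also have "\<dots> \<le> (4 powr ((s+1)/2) * (pw s k + pw s (n-k))) * (cmod (a k) * cmod (a (n-k)))"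
    by (rule mult_right_mono[OF main]) simp
  finally show ?thesis by (simp add: algebra_simps)
qed

lemma maxpow_le:
  fixes x y z s :: real
  shows "(1 + (max \<bar>x\<bar> (max \<bar>y\<bar> \<bar>z\<bar>))^2) powr (s/2) \<le>
     (1+x^2) powr (s/2) + (1+y^2) powr (s/2) + (1+z^2) powr (s/2)"
proof -
  have "max \<bar>x\<bar> (max \<bar>y\<bar> \<bar>z\<bar>) = \<bar>x\<bar> \<or> max \<bar>x\<bar> (max \<bar>y\<bar> \<bar>z\<bar>) = \<bar>y\<bar> \<or> max \<bar>x\<bar> (max \<bar>y\<bar> \<bar>z\<bar>) = \<bar>z\<bar>"
    by (auto simp: max_def)
  moreover have "(1+x^2) powr (s/2) \<ge> 0" "(1+y^2) powr (s/2) \<ge> 0" "(1+z^2) powr (s/2) \<ge> 0" by auto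
  ultimately show ?thesis by auto
qed

lemma B2_pt:
  fixes a :: "int \<Rightarrow> complex"
  assumes s: "s > 0" and e: "0 \<le> \<epsilon>" "\<epsilon> \<le> 1" and c0: "c0 > 0" and n: "n \<noteq> 0"
    and m: "(n1, n2, n3) \<in> B2_index c0 n"
  shows "pw (s+\<epsilon>) n * cmod (B2_term a n (n1, n2, n3)) \<le> 9 powr ((s+1)/2) * (2/c0) *
     (pw s n1 * cmod (a n1) * cmod (a n2) * cmod (a n3) + pw s n2 * cmod (a n2) * cmod (a n1) * cmod (a n3)
      + pw s n3 * cmod (a n3) * cmod (a n1) * cmod (a n2))"
proof -
  define x y z where "x = real_of_int n1" and "y = real_of_int n2" and "z = real_of_int n3"
  define F where "F = real_of_int (Phi3 n1 n2 n3)"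
  define Mx where "Mx = max \<bar>x\<bar> (max \<bar>y\<bar> \<bar>z\<bar>)"
  have idx: "n1 + n2 + n3 = n" "n1 \<noteq> 0" "n2 \<noteq> 0" "n3 \<noteq> 0" "n2 + n3 \<noteq> 0"
     "\<bar>real_of_int (Phi3 n1 n2 n3)\<bar> \<ge> c0 * real_of_int (max \<bar>n1\<bar> (max \<bar>n2\<bar> \<bar>n3\<bar>)) ^ 4"
    using m by (auto simp: B2_index_def)
  have MxI: "real_of_int (max \<bar>n1\<bar> (max \<bar>n2\<bar> \<bar>n3\<bar>)) = Mx" by (simp add: Mx_def x_def y_def z_def of_int_max)
  have nxy: "real_of_int n = x + y + z" using idx(1) by (simp add: x_def y_def z_def flip: idx(1))
  have r: "real_of_int (n * (n1^2 + (n2+n3)^2) * (n2+n3) * (n2^2+n3^2)) /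
       (real_of_int (Phi2 n1 (n2+n3)) * real_of_int (Phi3 n1 n2 n3))
     = ((x+y+z)*(x^2+(y+z)^2)*(y+z)*(y^2+z^2)) / (((x+(y+z))^5 - x^5 - (y+z)^5) * F)"
    unfolding Phi2_def F_def using nxy by (simp add: x_def y_def z_def)
  define R where "R = ((x+y+z)*(x^2+(y+z)^2)*(y+z)*(y^2+z^2)) / (((x+(y+z))^5 - x^5 - (y+z)^5) * F)"
  have cm: "cmod (B2_term a n (n1, n2, n3)) = \<bar>R\<bar> * cmod (a n1) * cmod (a n2) * cmod (a n3)"
    unfolding B2_term_def prod.case cmod_r3 r R_def by (rule refl)
  have main: "pw (s+\<epsilon>) n * \<bar>R\<bar> \<le> 9 powr ((s+1)/2) * (2/c0) * (1 + Mx^2) powr (s/2)"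
    unfolding pw_def nxy R_def
    by (rule core2[OF _ _ _ _ _ Mx_def]) (use idx c0 e s n nxy in \<open>auto simp: x_def y_def z_def F_def MxI[symmetric] int_abs_ge1\<close>)
  also have "\<dots> \<le> 9 powr ((s+1)/2) * (2/c0) * (pw s n1 + pw s n2 + pw s n3)"
    unfolding Mx_def pw_def x_def[symmetric] y_def[symmetric] z_def[symmetric]
    by (rule mult_left_mono[OF maxpow_le]) (use c0 in auto)
  finally have main2: "pw (s+\<epsilon>) n * \<bar>R\<bar> \<le> 9 powr ((s+1)/2) * (2/c0) * (pw s n1 + pw s n2 + pw s n3)" .
  have "pw (s+\<epsilon>) n * cmod (B2_term a n (n1, n2, n3)) = (pw (s+\<epsilon>) n * \<bar>R\<bar>) * (cmod (a n1) * cmod (a n2) * cmod (a n3))"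
    unfolding cm by (simp add: mult_ac)
  also have "\<dots> \<le> (9 powr ((s+1)/2) * (2/c0) * (pw s n1 + pw s n2 + pw s n3)) * (cmod (a n1) * cmod (a n2) * cmod (a n3))"
    by (rule mult_right_mono[OF main2]) simp
  finally show ?thesis by (simp add: algebra_simps add_divide_distrib)
qed



lemma pw_sq: "(pw s n)^2 = (1 + (real_of_int n)^2) powr s"
proof -
  have "(pw s n)^2 = pw s n * pw s n" by (simp add: power2_eq_square)
  also have "\<dots> = (1 + (real_of_int n)^2) powr (s/2 + s/2)" unfolding pw_def powr_add[symmetric] ..
  finally show ?thesis by simp
qed

lemma pw_inv: "pw (-s) n * pw s n = 1"
proof -
  have "pw (-s) n * pw s n = (1 + (real_of_int n)^2) powr (-s/2 + s/2)" unfolding pw_def powr_add[symmetric] by simp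
  moreover have "1 + (real_of_int n)^2 \<noteq> 0" by (smt (verit) zero_le_power2)
  ultimately show ?thesis by simp
qed

definition Kw :: "real \<Rightarrow> real" where
  "Kw s = sqrt (infsum (\<lambda>n::int. (1 + (real_of_int n)^2) powr (-s)) UNIV)"

lemma l2w:
  assumes "in_Hs s a"
  shows "(\<lambda>n. (pw s n * cmod (a n))^2) summable_on UNIV"
    and "infsum (\<lambda>n. (pw s n * cmod (a n))^2) UNIV = (Hs_norm s a)^2"
proof -
  have eq: "(\<lambda>n. (pw s n * cmod (a n))^2) = (\<lambda>n. (1 + (real_of_int n)^2) powr s * (cmod (a n))^2)"
    by (simp add: power_mult_distrib pw_sq)
  show "(\<lambda>n. (pw s n * cmod (a n))^2) summable_on UNIV" using assms unfolding eq in_Hs_def by simp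
  have "infsum (\<lambda>n. (1 + (real_of_int n)^2) powr s * (cmod (a n))^2) UNIV \<ge> 0"
    by (intro infsum_nonneg) simp
  then show "infsum (\<lambda>n. (pw s n * cmod (a n))^2) UNIV = (Hs_norm s a)^2"
    unfolding eq Hs_norm_def by simp
qed

lemma Hs_norm_nonneg: "Hs_norm s a \<ge> 0" unfolding Hs_norm_def by (simp add: infsum_nonneg)

lemma l1b:
  assumes s: "s > 1/2" and a: "in_Hs s a"
  shows "(\<lambda>n. cmod (a n)) summable_on UNIV"
    and "infsum (\<lambda>n. cmod (a n)) UNIV \<le> Kw s * Hs_norm s a"
proof -
  define K2 where "K2 = infsum (\<lambda>n::int. (1 + (real_of_int n)^2) powr (-s)) UNIV"
  note ws = weight_summable[OF s]
  note L = l2w[OF a]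
  have fin: "sum (\<lambda>n. cmod (a n)) F \<le> Kw s * Hs_norm s a" if F: "finite F" for F
  proof -
    have "sum (\<lambda>n. cmod (a n)) F = (\<Sum>n\<in>F. pw (-s) n * (pw s n * cmod (a n)))"
      by (rule sum.cong) (auto simp: mult.assoc[symmetric] pw_inv)
    also have "\<dots>^2 \<le> (\<Sum>n\<in>F. (pw (-s) n)^2) * (\<Sum>n\<in>F. (pw s n * cmod (a n))^2)"
      by (rule Cauchy_Schwarz_ineq_sum)
    also have "\<dots> \<le> K2 * (Hs_norm s a)^2"
    proof (rule mult_mono)
      show "(\<Sum>n\<in>F. (pw (-s) n)^2) \<le> K2" unfolding pw_sq K2_def
        by (rule nn_le_infsum[OF ws F]) auto
      show "(\<Sum>n\<in>F. (pw s n * cmod (a n))^2) \<le> (Hs_norm s a)^2" unfolding L(2)[symmetric]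
        by (rule nn_le_infsum[OF L(1) F]) auto
      show "0 \<le> K2" unfolding K2_def by (intro infsum_nonneg) auto
    qed (auto intro: sum_nonneg)
    finally have "(sum (\<lambda>n. cmod (a n)) F)^2 \<le> K2 * (Hs_norm s a)^2" .
    then have "sum (\<lambda>n. cmod (a n)) F \<le> sqrt (K2 * (Hs_norm s a)^2)" by (rule real_le_rsqrt)
    also have "\<dots> = Kw s * Hs_norm s a" by (simp add: Kw_def K2_def real_sqrt_mult Hs_norm_nonneg)
    finally show ?thesis .
  qed
  show "(\<lambda>n. cmod (a n)) summable_on UNIV" "infsum (\<lambda>n. cmod (a n)) UNIV \<le> Kw s * Hs_norm s a"
    using nn_bound[of UNIV "\<lambda>n. cmod (a n)", OF _ fin] by auto
qed



lemma abs_bound_step: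
  fixes t :: "'a \<Rightarrow> complex"
  assumes P: "P > 0" and fin: "\<And>F. finite F \<Longrightarrow> F \<subseteq> S \<Longrightarrow> (\<Sum>k\<in>F. P * cmod (t k)) \<le> D"
  shows "t summable_on S" "P * cmod (infsum t S) \<le> D"
proof -
  have "(\<Sum>k\<in>F. cmod (t k)) \<le> D / P" if "finite F" "F \<subseteq> S" for F
    using fin[OF that] P by (simp add: pos_le_divide_eq mult.commute sum_distrib_left)
  then have nb: "(\<lambda>k. cmod (t k)) summable_on S" "infsum (\<lambda>k. cmod (t k)) S \<le> D / P"
    using nn_bound[of S "\<lambda>k. cmod (t k)"] by auto
  show "t summable_on S" by (rule abs_summable_summable) (use nb in simp)
  have "cmod (infsum t S) \<le> infsum (\<lambda>k. cmod (t k)) S" by (rule norm_infsum_bound) (use nb in simp)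
  also have "\<dots> \<le> D / P" by (rule nb(2))
  finally show "P * cmod (infsum t S) \<le> D" using P by (simp add: pos_le_divide_eq mult.commute)
qed

lemma pw_pos: "pw s n > 0"
proof -
  have "1 + (real_of_int n)^2 > 0" by (smt (verit) zero_le_power2)
  then show ?thesis by (simp add: pw_def)
qed

lemma B1_est:
  fixes a :: "int \<Rightarrow> complex"
  assumes s: "s > 0" and e: "0 \<le> \<epsilon>" "\<epsilon> \<le> 1"
    and fs: "(\<lambda>k. (pw s k * cmod (a k))^2) summable_on UNIV" and gs: "(\<lambda>k. cmod (a k)) summable_on UNIV"
  shows "n \<noteq> 0 \<Longrightarrow> B1_term a n summable_on B1_index n"
    and "pw (s+\<epsilon>) n * cmod (B1 a n) \<le> 2 * 4 powr ((s+1)/2) * infsum (\<lambda>k. pw s k * cmod (a k) * cmod (a (n - k))) UNIV"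
proof -
  define C1 where "C1 = 4 powr ((s+1)/2)"
  define D where "D = infsum (\<lambda>k. pw s k * cmod (a k) * cmod (a (n - k))) UNIV"
  note CL = conv_l2[of "\<lambda>k. pw s k * cmod (a k)" "\<lambda>k. cmod (a k)", OF _ _ fs gs]
  have cs: "(\<lambda>k. pw s k * cmod (a k) * cmod (a (n - k))) summable_on UNIV"
    using CL(1)[of n] by (simp add: pw_nonneg)
  have D0: "D \<ge> 0" unfolding D_def by (intro infsum_nonneg) (simp add: pw_nonneg)
  have C10: "C1 \<ge> 0" by (simp add: C1_def)
  have fin: "(\<Sum>k\<in>F. pw (s+\<epsilon>) n * cmod (B1_term a n k)) \<le> 2 * C1 * D"
    if n: "n \<noteq> 0" and F: "finite F" "F \<subseteq> B1_index n" for F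
  proof -
    have "(\<Sum>k\<in>F. pw (s+\<epsilon>) n * cmod (B1_term a n k)) \<le>
       (\<Sum>k\<in>F. C1 * (pw s k * cmod (a k) * cmod (a (n-k)) + cmod (a k) * (pw s (n-k) * cmod (a (n-k)))))"
      by (rule sum_mono) (use B1_pt[OF s e n] F in \<open>auto simp: C1_def\<close>)
    also have "\<dots> = C1 * ((\<Sum>k\<in>F. pw s k * cmod (a k) * cmod (a (n-k))) +
                          (\<Sum>k\<in>F. pw s (n-k) * cmod (a (n-k)) * cmod (a k)))"
      by (simp add: sum_distrib_left[symmetric] sum.distrib[symmetric] mult_ac)
    also have "\<dots> \<le> C1 * (D + D)"
    proof (rule mult_left_mono[OF add_mono C10])
      show "(\<Sum>k\<in>F. pw s k * cmod (a k) * cmod (a (n-k))) \<le> D" unfolding D_def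
        by (rule nn_le_infsum[OF cs F(1)]) (auto simp: pw_nonneg)
      have "(\<Sum>k\<in>F. pw s (n-k) * cmod (a (n-k)) * cmod (a k)) =
            (\<Sum>j\<in>(\<lambda>k. n - k) ` F. pw s j * cmod (a j) * cmod (a (n - j)))"
        by (subst sum.reindex) (auto simp: inj_on_def)
      also have "\<dots> \<le> D" unfolding D_def
        by (rule nn_le_infsum[OF cs]) (use F in \<open>auto simp: pw_nonneg\<close>)
      finally show "(\<Sum>k\<in>F. pw s (n-k) * cmod (a (n-k)) * cmod (a k)) \<le> D" .
    qed
    finally show ?thesis by simp
  qed
  show "n \<noteq> 0 \<Longrightarrow> B1_term a n summable_on B1_index n"
    using abs_bound_step(1)[OF pw_pos fin] by blast
  show "pw (s+\<epsilon>) n * cmod (B1 a n) \<le> 2 * 4 powr ((s+1)/2) * D"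
  proof (cases "n = 0")
    case True then show ?thesis using D0 by (simp add: B1_def)
  next
    case False
    then show ?thesis using abs_bound_step(2)[OF pw_pos fin[OF False]] by (simp add: B1_def C1_def)
  qed
qed

lemma B2_est:
  fixes a :: "int \<Rightarrow> complex"
  assumes s: "s > 0" and e: "0 \<le> \<epsilon>" "\<epsilon> \<le> 1" and c0: "c0 > 0"
    and fs: "(\<lambda>k. (pw s k * cmod (a k))^2) summable_on UNIV" and gs: "(\<lambda>k. cmod (a k)) summable_on UNIV"
  shows "n \<noteq> 0 \<Longrightarrow> B2_term a n summable_on B2_index c0 n"
    and "pw (s+\<epsilon>) n * cmod (B2 c0 a n) \<le> 3 * (9 powr ((s+1)/2) * (2/c0)) *
       infsum (\<lambda>k. pw s k * cmod (a k) * infsum (\<lambda>l. cmod (a l) * cmod (a ((n - k) - l))) UNIV) UNIV"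
proof -
  define C2 where "C2 = 9 powr ((s+1)/2) * (2/c0)"
  define D where "D = infsum (\<lambda>k. pw s k * cmod (a k) * infsum (\<lambda>l. cmod (a l) * cmod (a ((n - k) - l))) UNIV) UNIV"
  define T where "T = (\<lambda>(x::int,y::int,z::int). pw s x * cmod (a x) * cmod (a y) * cmod (a z))"
  have D0: "D \<ge> 0" unfolding D_def by (intro infsum_nonneg mult_nonneg_nonneg) (auto simp: pw_nonneg)
  have C20: "C2 \<ge> 0" using c0 by (simp add: C2_def)
  have TB: "sum T G \<le> D" if G: "finite G" "G \<subseteq> {(x,y,z). x + y + z = n}" for G
  proof -
    have "sum T G = (\<Sum>(x,y,z)\<in>G. (pw s x * cmod (a x)) * cmod (a y) * cmod (a z))"
      by (simp add: T_def)
    also have "\<dots> \<le> D" unfolding D_def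
      by (rule triple_bound[OF _ _ fs gs G]) (auto simp: pw_nonneg)
    finally show ?thesis .
  qed
  define sw where "sw = (\<lambda>(x::int,y::int,z::int). (y,x,z))"
  define rt where "rt = (\<lambda>(x::int,y::int,z::int). (z,x,y))"
  have fin: "(\<Sum>m\<in>F. pw (s+\<epsilon>) n * cmod (B2_term a n m)) \<le> 3 * C2 * D"
    if n: "n \<noteq> 0" and F: "finite F" "F \<subseteq> B2_index c0 n" for F
  proof -
    have Fs: "F \<subseteq> {(x,y,z). x + y + z = n}" using F by (auto simp: B2_index_def)
    have "(\<Sum>m\<in>F. pw (s+\<epsilon>) n * cmod (B2_term a n m)) \<le> (\<Sum>m\<in>F. C2 * (T m + T (sw m) + T (rt m)))"
    proof (rule sum_mono)
      fix m assume "m \<in> F"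
      then obtain x y z where m: "m = (x,y,z)" "(x,y,z) \<in> B2_index c0 n" using F by (cases m) auto
      show "pw (s+\<epsilon>) n * cmod (B2_term a n m) \<le> C2 * (T m + T (sw m) + T (rt m))"
        using B2_pt[OF s e c0 n m(2), of a] unfolding m(1) by (simp add: T_def sw_def rt_def C2_def)
    qed
    also have "\<dots> = C2 * (sum T F + sum (T \<circ> sw) F + sum (T \<circ> rt) F)"
      by (simp add: sum_distrib_left[symmetric] sum.distrib[symmetric])
    also have "\<dots> \<le> C2 * (D + D + D)"
    proof (rule mult_left_mono[OF add_mono[OF add_mono] C20])
      show "sum T F \<le> D" by (rule TB[OF F(1) Fs])
      have "inj_on sw F" by (auto simp: sw_def inj_on_def)
      then have "sum (T \<circ> sw) F = sum T (sw ` F)" by (simp add: sum.reindex)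
      also have "\<dots> \<le> D" by (rule TB) (use F(1) Fs in \<open>auto simp: sw_def\<close>)
      finally show "sum (T \<circ> sw) F \<le> D" .
      have "inj_on rt F" by (auto simp: rt_def inj_on_def)
      then have "sum (T \<circ> rt) F = sum T (rt ` F)" by (simp add: sum.reindex)
      also have "\<dots> \<le> D" by (rule TB) (use F(1) Fs in \<open>auto simp: rt_def\<close>)
      finally show "sum (T \<circ> rt) F \<le> D" .
    qed
    finally show ?thesis by simp
  qed
  show "n \<noteq> 0 \<Longrightarrow> B2_term a n summable_on B2_index c0 n"
    using abs_bound_step(1)[OF pw_pos fin] by blast
  show "pw (s+\<epsilon>) n * cmod (B2 c0 a n) \<le> 3 * (9 powr ((s+1)/2) * (2/c0)) * D"
  proof (cases "n = 0")
    case True then show ?thesis using D0 c0 by (simp add: B2_def)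
  next
    case False
    then show ?thesis using abs_bound_step(2)[OF pw_pos fin[OF False]] by (simp add: B2_def C2_def)
  qed
qed



definition Cst :: "real \<Rightarrow> real \<Rightarrow> real" where
  "Cst s c0 = sqrt (8 * (4 powr ((s+1)/2))^2 * (Kw s)^2 + 18 * (9 powr ((s+1)/2) * (2/c0))^2 * (Kw s)^4)"

lemma seq_est:
  fixes a :: "int \<Rightarrow> complex"
  assumes s: "s > 1/2" and e: "0 \<le> \<epsilon>" "\<epsilon> < 1" and c0: "c0 > 0" and a: "in_Hs s a"
  shows "\<forall>n. n \<noteq> 0 \<longrightarrow> B1_term a n summable_on B1_index n \<and> B2_term a n summable_on B2_index c0 n"
    and "in_Hs (s+\<epsilon>) (\<lambda>n. B1 a n + B2 c0 a n)"
    and "Hs_norm (s+\<epsilon>) (\<lambda>n. B1 a n + B2 c0 a n) \<le> Cst s c0 * ((Hs_norm s a)^2 + (Hs_norm s a)^3)"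
proof -
  have s0: "s > 0" using s by simp
  have e1: "\<epsilon> \<le> 1" using e by simp
  define A where "A = Hs_norm s a"
  define K where "K = Kw s"
  define C1 where "C1 = 4 powr ((s+1)/2)"
  define C2 where "C2 = 9 powr ((s+1)/2) * (2/c0)"
  define D1 where "D1 n = infsum (\<lambda>k. pw s k * cmod (a k) * cmod (a (n - k))) UNIV" for n
  define bb where "bb j = infsum (\<lambda>l. cmod (a l) * cmod (a (j - l))) UNIV" for j
  define D2 where "D2 n = infsum (\<lambda>k. pw s k * cmod (a k) * bb (n - k)) UNIV" for n
  have A0: "A \<ge> 0" by (simp add: A_def Hs_norm_nonneg)
  have K0: "K \<ge> 0" unfolding K_def Kw_def by (simp add: infsum_nonneg)
  note fs = l2w(1)[OF a]
  note fsum = l2w(2)[OF a]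
  note gs = l1b(1)[OF s a]
  note gsum = l1b(2)[OF s a]
  have w0: "\<And>k. pw s k * cmod (a k) \<ge> 0" by (simp add: pw_nonneg)
  have b0: "\<And>k. cmod (a k) \<ge> 0" by simp
  define Bs where "Bs = infsum (\<lambda>k. cmod (a k)) UNIV"
  have Bs0: "Bs \<ge> 0" unfolding Bs_def by (intro infsum_nonneg) simp
  have BsK: "Bs \<le> K * A" using gsum by (simp add: Bs_def K_def A_def)
  note CL1 = conv_l2[OF w0 b0 fs gs]
  note CB = conv_l1[OF b0 b0 gs gs]
  have bb0: "\<And>j. bb j \<ge> 0" unfolding bb_def by (intro infsum_nonneg) simp
  have bbs: "bb summable_on UNIV" unfolding bb_def by (rule CB(2))
  have bbsum: "infsum bb UNIV \<le> Bs * Bs" unfolding bb_def Bs_def by (rule CB(3))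
  note CL2 = conv_l2[OF w0 bb0 fs bbs]
  have D1s: "(\<lambda>n. (D1 n)^2) summable_on UNIV" unfolding D1_def by (rule CL1(2))
  have D1sum: "infsum (\<lambda>n. (D1 n)^2) UNIV \<le> A^2 * Bs^2"
    using CL1(3) fsum by (simp add: D1_def A_def Bs_def)
  have D2s: "(\<lambda>n. (D2 n)^2) summable_on UNIV" unfolding D2_def by (rule CL2(2))
  have BB0: "infsum bb UNIV \<ge> 0" by (intro infsum_nonneg) (simp add: bb0)
  have D2sum: "infsum (\<lambda>n. (D2 n)^2) UNIV \<le> A^2 * (Bs * Bs)^2"
  proof -
    have "infsum (\<lambda>n. (D2 n)^2) UNIV \<le> A^2 * (infsum bb UNIV)^2"
      using CL2(3) fsum by (simp add: D2_def A_def)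
    also have "\<dots> \<le> A^2 * (Bs * Bs)^2"
      by (intro mult_left_mono power_mono bbsum BB0) simp
    finally show ?thesis .
  qed
  note E1 = B1_est[OF s0 e(1) e1 fs gs]
  note E2 = B2_est[OF s0 e(1) e1 c0 fs gs]
  show "\<forall>n. n \<noteq> 0 \<longrightarrow> B1_term a n summable_on B1_index n \<and> B2_term a n summable_on B2_index c0 n"
    using E1(1) E2(1) by blast
  have pt1: "pw (s+\<epsilon>) n * cmod (B1 a n) \<le> 2 * C1 * D1 n" for n
    using E1(2)[of n] by (simp add: C1_def D1_def)
  have pt2: "pw (s+\<epsilon>) n * cmod (B2 c0 a n) \<le> 3 * C2 * D2 n" for n
    using E2(2)[of n] by (simp add: C2_def D2_def bb_def)
  define G where "G n = (1 + (real_of_int n)^2) powr (s+\<epsilon>) * (cmod (B1 a n + B2 c0 a n))^2" for n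
  define H where "H n = 2 * (2*C1)^2 * (D1 n)^2 + 2 * (3*C2)^2 * (D2 n)^2" for n
  have GH: "G n \<le> H n" and G0: "G n \<ge> 0" for n
  proof -
    have D10: "D1 n \<ge> 0" unfolding D1_def by (intro infsum_nonneg) (simp add: pw_nonneg)
    have D20: "D2 n \<ge> 0" unfolding D2_def by (intro infsum_nonneg mult_nonneg_nonneg) (auto simp: pw_nonneg bb0)
    have "pw (s+\<epsilon>) n * cmod (B1 a n + B2 c0 a n) \<le> pw (s+\<epsilon>) n * cmod (B1 a n) + pw (s+\<epsilon>) n * cmod (B2 c0 a n)"
      by (simp add: distrib_left[symmetric] mult_left_mono norm_triangle_ineq pw_nonneg)
    also have "\<dots> \<le> 2 * C1 * D1 n + 3 * C2 * D2 n" by (rule add_mono[OF pt1 pt2])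
    finally have le: "pw (s+\<epsilon>) n * cmod (B1 a n + B2 c0 a n) \<le> 2 * C1 * D1 n + 3 * C2 * D2 n" .
    have "G n = (pw (s+\<epsilon>) n * cmod (B1 a n + B2 c0 a n))^2"
      by (simp add: G_def power_mult_distrib pw_sq)
    also have "\<dots> \<le> (2 * C1 * D1 n + 3 * C2 * D2 n)^2"
      by (rule power_mono[OF le]) (simp add: pw_nonneg)
    also have "\<dots> \<le> H n"
    proof -
      have "0 \<le> (2 * C1 * D1 n - 3 * C2 * D2 n)^2" by simp
      then show ?thesis unfolding H_def by (simp add: power2_eq_square algebra_simps)
    qed
    finally show "G n \<le> H n" .
    show "G n \<ge> 0" by (simp add: G_def)
  qed
  have Hs: "H summable_on UNIV" unfolding H_def
    by (intro summable_on_add summable_on_cmult_right D1s D2s)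
  have Gs: "G summable_on UNIV" by (rule summable_on_comparison_test[OF Hs]) (auto simp: GH G0)
  then show "in_Hs (s+\<epsilon>) (\<lambda>n. B1 a n + B2 c0 a n)" by (simp add: in_Hs_def G_def[abs_def])
  have "infsum G UNIV \<le> infsum H UNIV" by (rule infsum_mono[OF Gs Hs GH])
  also have "infsum H UNIV = 2 * (2*C1)^2 * infsum (\<lambda>n. (D1 n)^2) UNIV + 2 * (3*C2)^2 * infsum (\<lambda>n. (D2 n)^2) UNIV"
    unfolding H_def
    by (subst infsum_add) (auto intro!: summable_on_cmult_right D1s D2s simp: infsum_cmult_right D1s D2s)
  also have "\<dots> \<le> 2 * (2*C1)^2 * (A^2 * (K*A)^2) + 2 * (3*C2)^2 * (A^2 * ((K*A) * (K*A))^2)"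
  proof (rule add_mono)
    have "A^2 * Bs^2 \<le> A^2 * (K*A)^2" by (intro mult_left_mono power_mono BsK Bs0) simp
    then show "2 * (2*C1)^2 * infsum (\<lambda>n. (D1 n)^2) UNIV \<le> 2 * (2*C1)^2 * (A^2 * (K*A)^2)"
      using D1sum by (intro mult_left_mono) auto
    have "Bs * Bs \<le> (K*A) * (K*A)" by (intro mult_mono BsK Bs0) (use K0 A0 in auto)
    then have "A^2 * (Bs*Bs)^2 \<le> A^2 * ((K*A) * (K*A))^2"
      by (intro mult_left_mono power_mono) (auto simp: Bs0)
    then show "2 * (3*C2)^2 * infsum (\<lambda>n. (D2 n)^2) UNIV \<le> 2 * (3*C2)^2 * (A^2 * ((K*A) * (K*A))^2)"
      using D2sum by (intro mult_left_mono) auto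
  qed
  also have "\<dots> = (8 * C1^2 * K^2) * A^4 + (18 * C2^2 * K^4) * A^6"
    by (simp add: power2_eq_square power_mult_distrib algebra_simps numeral_eq_Suc)
  also have "\<dots> \<le> (8 * C1^2 * K^2 + 18 * C2^2 * K^4) * (A^2 + A^3)^2"
  proof -
    have a4: "A^4 \<le> (A^2 + A^3)^2" and a6: "A^6 \<le> (A^2 + A^3)^2"
    proof -
      have "(A^2 + A^3)^2 = A^4 + 2*A^5 + A^6" by (simp add: power2_eq_square algebra_simps numeral_eq_Suc)
      moreover have "A^5 \<ge> 0" "A^4 \<ge> 0" "A^6 \<ge> 0" using A0 by auto
      ultimately show "A^4 \<le> (A^2 + A^3)^2" "A^6 \<le> (A^2 + A^3)^2" by linarith+
    qed
    have "(8 * C1^2 * K^2) * A^4 \<le> (8 * C1^2 * K^2) * (A^2 + A^3)^2" by (rule mult_left_mono[OF a4]) simp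
    moreover have "(18 * C2^2 * K^4) * A^6 \<le> (18 * C2^2 * K^4) * (A^2 + A^3)^2"
      by (rule mult_left_mono[OF a6]) (simp add: K0)
    ultimately show ?thesis by (simp add: distrib_right)
  qed
  finally have Gle: "infsum G UNIV \<le> (8 * C1^2 * K^2 + 18 * C2^2 * K^4) * (A^2 + A^3)^2" .
  have "Hs_norm (s+\<epsilon>) (\<lambda>n. B1 a n + B2 c0 a n) = sqrt (infsum G UNIV)"
    by (simp add: Hs_norm_def G_def[abs_def])
  also have "\<dots> \<le> sqrt ((8 * C1^2 * K^2 + 18 * C2^2 * K^4) * (A^2 + A^3)^2)"
    by (rule real_sqrt_le_mono[OF Gle])
  also have "\<dots> = Cst s c0 * (A^2 + A^3)"
    using A0 by (simp add: Cst_def real_sqrt_mult C1_def C2_def K_def)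
  finally show "Hs_norm (s+\<epsilon>) (\<lambda>n. B1 a n + B2 c0 a n) \<le> Cst s c0 * ((Hs_norm s a)^2 + (Hs_norm s a)^3)"
    by (simp add: A_def)
qed



lemma Cst_nonneg: "Cst s c0 \<ge> 0"
  unfolding Cst_def by (intro real_sqrt_ge_zero add_nonneg_nonneg mult_nonneg_nonneg) auto

theorem lemma5p2:
  fixes s \<epsilon> c0 :: real
  assumes "s > 1/2" and "0 \<le> \<epsilon>" and "\<epsilon> < 1" and "c0 > 0"
  shows "\<exists>C>0. \<forall>(I :: real set) (u :: real \<Rightarrow> int \<Rightarrow> complex).
     I \<noteq> {} \<longrightarrow>
     (\<forall>t\<in>I. real_mean_zero (u t) \<and> in_Hs s (u t)) \<longrightarrow>
     bdd_above ((\<lambda>t. Hs_norm s (u t)) ` I) \<longrightarrow>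
     (let M = (SUP t\<in>I. Hs_norm s (u t)) in
       \<forall>t\<in>I.
         (\<forall>n. n \<noteq> 0 \<longrightarrow> B1_term (u t) n summable_on B1_index n
                        \<and> B2_term (u t) n summable_on B2_index c0 n) \<and>
         in_Hs (s + \<epsilon>) (\<lambda>n. B1 (u t) n + B2 c0 (u t) n) \<and>
         Hs_norm (s + \<epsilon>) (\<lambda>n. B1 (u t) n + B2 c0 (u t) n) \<le> C * (M^2 + M^3))"
proof (intro exI[of _ "Cst s c0 + 1"] conjI allI impI)
  show "Cst s c0 + 1 > 0" using Cst_nonneg[of s c0] by linarith
  fix I :: "real set" and u :: "real \<Rightarrow> int \<Rightarrow> complex"
  assume ne: "I \<noteq> {}" and hyp: "\<forall>t\<in>I. real_mean_zero (u t) \<and> in_Hs s (u t)"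
    and bdd: "bdd_above ((\<lambda>t. Hs_norm s (u t)) ` I)"
  define M where "M = (SUP t\<in>I. Hs_norm s (u t))"
  have "\<forall>t\<in>I.
         (\<forall>n. n \<noteq> 0 \<longrightarrow> B1_term (u t) n summable_on B1_index n
                        \<and> B2_term (u t) n summable_on B2_index c0 n) \<and>
         in_Hs (s + \<epsilon>) (\<lambda>n. B1 (u t) n + B2 c0 (u t) n) \<and>
         Hs_norm (s + \<epsilon>) (\<lambda>n. B1 (u t) n + B2 c0 (u t) n) \<le> (Cst s c0 + 1) * (M^2 + M^3)"
  proof
    fix t assume t: "t \<in> I"
    have a: "in_Hs s (u t)" using hyp t by blast
    note SE = seq_est[OF assms(1,2,3,4) a]
    define A where "A = Hs_norm s (u t)"
    have A0: "A \<ge> 0" by (simp add: A_def Hs_norm_nonneg)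
    have AM: "A \<le> M" unfolding A_def M_def by (rule cSUP_upper[OF t bdd])
    have M0: "M \<ge> 0" using A0 AM by linarith
    have "A^2 + A^3 \<le> M^2 + M^3" using A0 AM by (intro add_mono power_mono) auto
    moreover have "A^2 + A^3 \<ge> 0" using A0 by simp
    ultimately have "Cst s c0 * (A^2 + A^3) \<le> (Cst s c0 + 1) * (M^2 + M^3)"
      using Cst_nonneg[of s c0] by (intro mult_mono) auto
    then show "(\<forall>n. n \<noteq> 0 \<longrightarrow> B1_term (u t) n summable_on B1_index n
                        \<and> B2_term (u t) n summable_on B2_index c0 n) \<and>
         in_Hs (s + \<epsilon>) (\<lambda>n. B1 (u t) n + B2 c0 (u t) n) \<and>
         Hs_norm (s + \<epsilon>) (\<lambda>n. B1 (u t) n + B2 c0 (u t) n) \<le> (Cst s c0 + 1) * (M^2 + M^3)"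
      using SE by (auto simp: A_def)
  qed
  then show "let M = (SUP t\<in>I. Hs_norm s (u t)) in
       \<forall>t\<in>I.
         (\<forall>n. n \<noteq> 0 \<longrightarrow> B1_term (u t) n summable_on B1_index n
                        \<and> B2_term (u t) n summable_on B2_index c0 n) \<and>
         in_Hs (s + \<epsilon>) (\<lambda>n. B1 (u t) n + B2 c0 (u t) n) \<and>
         Hs_norm (s + \<epsilon>) (\<lambda>n. B1 (u t) n + B2 c0 (u t) n) \<le> (Cst s c0 + 1) * (M^2 + M^3)"
    by (simp add: M_def Let_def)
qed

end
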